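(* Fix a real number $m\ge1$. There is a positive constant $C$ (depending only on $m$ and $r$) such that for all $N\ge1$ and all $1\le k\le N$, $$E\big[X_{k,N}^m\big]\le\Big(\frac kN\Big)^{mr}\Big(1+\frac Ck\Big).$$
   Context: Fix $r\in(0,1)$. Multitype Yule process: at time $0$ a single individual of type $1$ is born; no deaths; each individual independently gives birth at rate $1$; a newborn has, independently, its parent's type with probability $1-r$ and otherwise a brand-new type. Individuals are numbered in order of birth (the initial one is the 1st); if the $k$-th individual born has a type different from its parent, that type is called type $k$. $T_N$ is the time the population reaches size $N$; $X_{k,N}$ is the fraction of individuals at time $T_N$ with type in $\{1,\dots,k\}$. *)

theory Defs
  imports "HOL-Probability.Probability"
begin

text \<open>Embedded jump chain of the multitype Yule process.  A state is the list of types
  of the individuals in birth order (entry i-1 is the type of the i-th individual).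
  Given n individuals, the next birth comes from a uniformly chosen parent
  (all individuals reproduce at rate 1); the newborn (individual n+1) keeps the
  parent's type with probability 1-r and otherwise receives the new type n+1.\<close>

definition yule_step :: "real \<Rightarrow> nat list \<Rightarrow> nat list pmf" where
  "yule_step r ts =
     bind_pmf (pmf_of_set {..<length ts}) (\<lambda>j.
     bind_pmf (bernoulli_pmf r) (\<lambda>mut.
       return_pmf (ts @ [if mut then Suc (length ts) else ts ! j])))"

text \<open>Population at time T_(n+1), i.e. when the size first reaches n+1.\<close>
primrec yule_pop :: "real \<Rightarrow> nat \<Rightarrow> nat list pmf" where
  "yule_pop r 0 = return_pmf [1]"
| "yule_pop r (Suc n) = bind_pmf (yule_pop r n) (yule_step r)"

definition frac_types :: "nat \<Rightarrow> nat list \<Rightarrow> real" where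
  "frac_types k ts = real (card {i. i < length ts \<and> 1 \<le> ts ! i \<and> ts ! i \<le> k}) / real (length ts)"

definition moment_X :: "real \<Rightarrow> real \<Rightarrow> nat \<Rightarrow> nat \<Rightarrow> real" where
  "moment_X r m k N = measure_pmf.expectation (yule_pop r (N - 1)) (\<lambda>ts. frac_types k ts powr m)"

end

theory Submission
  imports Defs
begin
lemma bern_powr:
  fixes x m :: real assumes "0 \<le> x" "1 \<le> m"
  shows "1 + m * x \<le> (1 + x) powr m"
proof -
  have d: "((\<lambda>t. (1 + t) powr m - 1 - m * t) has_real_derivative (m * (1 + t) powr (m - 1) - m)) (at t)"
    if "0 \<le> t" for t
  proof -
    have p: "((\<lambda>z. z powr m) has_real_derivative m * (1 + t) powr (m - 1)) (at (1 + t))"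
      using has_real_derivative_powr[of "1+t" m] that by simp
    have q: "((\<lambda>t. 1 + t) has_real_derivative 1) (at t)"
      by (auto intro!: derivative_eq_intros)
    have "((\<lambda>t. (1 + t) powr m) has_real_derivative (m * (1 + t) powr (m - 1)) * 1) (at t)"
      using DERIV_chain2[OF p q] by simp
    then show ?thesis using that by (auto intro!: derivative_eq_intros)
  qed
  have nn: "0 \<le> m * (1 + t) powr (m - 1) - m" if "0 \<le> t" for t
  proof -
    have "1 \<le> (1 + t) powr (m - 1)" using that assms by (simp add: ge_one_powr_ge_zero)
    then show ?thesis using assms by (simp add: mult_le_cancel_left1)
  qed
  have "(\<lambda>t. (1 + t) powr m - 1 - m * t) 0 \<le> (\<lambda>t. (1 + t) powr m - 1 - m * t) x"
    by (rule DERIV_nonneg_imp_nondecreasing[OF assms(1)]) (use d nn in blast)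
  then show ?thesis by simp
qed

lemma ln_lower: fixes y :: real assumes "0 \<le> y" shows "y - y^2 \<le> ln (1 + y)"
proof (cases "y \<le> 1")
  case True then show ?thesis using ln_one_plus_pos_lower_bound[of y] assms by simp
next
  case False
  then have "y - y^2 \<le> 0" by (simp add: power2_eq_square)
  moreover have "0 \<le> ln (1 + y)" using assms by simp
  ultimately show ?thesis by linarith
qed
primrec gg :: "real \<Rightarrow> nat \<Rightarrow> real" where
  "gg m 0 = 1"
| "gg m (Suc a) = gg m a * (1 + m / real a)"

lemma gg_pos: "0 \<le> m \<Longrightarrow> 0 < gg m a"
  by (induction a) (auto intro!: mult_pos_pos add_pos_nonneg)

lemma phi_mono:
  assumes "1 \<le> m" "1 \<le> a" "a \<le> b"
  shows "real a powr m / gg m a \<le> real b powr m / gg m b"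
  using assms(3)
proof (induction b rule: dec_induct)
  case base then show ?case by simp
next
  case (step b)
  have b1: "1 \<le> b" using step assms by linarith
  have gp: "0 < gg m b" using gg_pos assms by simp
  have "real b * (1 + 1 / real b) = real (Suc b)"
    using b1 by (simp add: field_simps)
  then have "real (Suc b) powr m = (real b * (1 + 1 / real b)) powr m"
    by simp
  also have "\<dots> = real b powr m * (1 + 1 / real b) powr m"
    using b1 by (simp add: powr_mult)
  finally have e: "real (Suc b) powr m = real b powr m * (1 + 1 / real b) powr m" .
  have "1 + m * (1 / real b) \<le> (1 + 1 / real b) powr m"
    using bern_powr[of "1 / real b" m] assms by simp
  then have "real b powr m * (1 + m / real b) \<le> real (Suc b) powr m"
    unfolding e by (intro mult_left_mono) auto
  then have "real b powr m * (1 + m / real b) / (gg m b * (1 + m / real b)) \<le> real (Suc b) powr m / (gg m b * (1 + m / real b))"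
    using gp b1 assms by (intro divide_right_mono) (auto intro!: mult_nonneg_nonneg add_nonneg_nonneg)
  moreover have "real b powr m * (1 + m / real b) / (gg m b * (1 + m / real b)) = real b powr m / gg m b"
  proof -
    have "0 < 1 + m / real b" using b1 assms by (intro add_pos_nonneg) auto
    then show ?thesis by (subst mult_divide_mult_cancel_right) auto
  qed
  ultimately have "real b powr m / gg m b \<le> real (Suc b) powr m / (gg m b * (1 + m / real b))"
    by simp
  then show ?case using step by simp
qed

lemma pointwise:
  assumes "1 \<le> m" "c \<le> N" "1 \<le> N"
  shows "(real c / real N) powr m \<le> gg m c / gg m N"
proof (cases "c = 0")
  case True then show ?thesis using gg_pos[of m] assms by (simp add: less_imp_le)
next
  case False
  have "real c powr m / gg m c \<le> real N powr m / gg m N"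
    using phi_mono[of m c N] assms False by simp
  moreover have "0 < gg m c" "0 < gg m N" "0 < real N powr m" using gg_pos assms by auto
  ultimately show ?thesis by (simp add: powr_divide field_simps)
qed

lemma gg_split: "k \<le> N \<Longrightarrow> gg m N = gg m k * (\<Prod>L\<in>{k..<N}. 1 + m / real L)"
proof (induction N rule: dec_induct)
  case base then show ?case by simp
next
  case (step n) then show ?case by (simp add: prod.op_ivl_Suc)
qed

lemma factor_bound:
  fixes m r :: real and N :: nat
  assumes "0 < r" "r < 1" "1 \<le> m" "1 \<le> N"
  shows "(1 + (1 - r) * m / real N) / (1 + m / real N)
     \<le> (real N / real (Suc N)) powr (m * r) * exp (m^2 * (2 / real N - 2 / real (Suc N)))"
proof -
  define x where "x = 1 / real N"
  have x0: "0 < x" using assms by (simp add: x_def)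
  have sq: "x^2 \<le> 2 / real N - 2 / real (Suc N)"
  proof -
    have "2 / real N - 2 / real (Suc N) = 2 / (real N * (real N + 1))"
      using assms by (simp add: field_simps)
    moreover have "1 / (real N * real N) \<le> 2 / (real N * (real N + 1))"
      using assms by (simp add: divide_simps)
    ultimately show ?thesis by (simp add: x_def power2_eq_square)
  qed
  have l1: "ln (1 + (1 - r) * m * x) \<le> (1 - r) * m * x"
    using x0 assms by (intro ln_add_one_self_le_self) simp
  have l2: "m * x - (m * x)^2 \<le> ln (1 + m * x)"
    using x0 assms by (intro ln_lower) simp
  have l3: "ln (1 + x) \<le> x" using x0 by (intro ln_add_one_self_le_self) simp
  have "ln (1 + (1 - r) * m * x) - ln (1 + m * x) \<le> - (m * r) * ln (1 + x) + m^2 * x^2"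
  proof -
    have "- (m * r) * x \<le> - (m * r) * ln (1 + x)" using l3 assms by simp
    moreover have "(1 - r) * m * x = m * x - m * r * x" by (simp add: algebra_simps)
    moreover have "(m * x)^2 = m^2 * x^2" by (simp add: power_mult_distrib)
    moreover have "- (m * r) * x = - (m * r * x)" by simp
    ultimately show ?thesis using l1 l2 by linarith
  qed
  also have "\<dots> \<le> - (m * r) * ln (1 + x) + m^2 * (2 / real N - 2 / real (Suc N))"
    using sq by (simp add: mult_left_mono)
  finally have L: "ln (1 + (1 - r) * m * x) - ln (1 + m * x)
     \<le> - (m * r) * ln (1 + x) + m^2 * (2 / real N - 2 / real (Suc N))" .
  have p1: "0 < 1 + (1 - r) * m * x" using x0 assms by (simp add: add_pos_nonneg)
  have p2: "0 < 1 + m * x" using x0 assms by (simp add: add_pos_nonneg)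
  have "(1 + (1 - r) * m / real N) / (1 + m / real N) = exp (ln (1 + (1 - r) * m * x) - ln (1 + m * x))"
    using p1 p2 by (simp add: exp_diff x_def)
  also have "\<dots> \<le> exp (- (m * r) * ln (1 + x) + m^2 * (2 / real N - 2 / real (Suc N)))"
    using L by simp
  also have "\<dots> = (real N / real (Suc N)) powr (m * r) * exp (m^2 * (2 / real N - 2 / real (Suc N)))"
  proof -
    have "real N / real (Suc N) = inverse (1 + x)" using assms by (simp add: x_def field_simps)
    then have "(real N / real (Suc N)) powr (m * r) = exp (- (m * r) * ln (1 + x))"
      using x0 by (simp add: powr_def ln_inverse)
    then show ?thesis by (simp add: exp_add[symmetric] algebra_simps)
  qed
  finally show ?thesis .
qed

lemma prod_bound:
  fixes m r :: real
  assumes "0 < r" "r < 1" "1 \<le> m" "1 \<le> k" "k \<le> N"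
  shows "(\<Prod>L\<in>{k..<N}. (1 + (1 - r) * m / real L) / (1 + m / real L))
     \<le> (real k / real N) powr (m * r) * exp (m^2 * (2 / real k - 2 / real N))"
  using assms(5)
proof (induction N rule: dec_induct)
  case base then show ?case using assms by simp
next
  case (step n)
  have n1: "1 \<le> n" using step assms by linarith
  define A where "A = (real k / real n) powr (m * r)"
  define B where "B = exp (m^2 * (2 / real k - 2 / real n))"
  define C where "C = (real n / real (Suc n)) powr (m * r)"
  define D where "D = exp (m^2 * (2 / real n - 2 / real (Suc n)))"
  define P where "P = (\<Prod>L\<in>{k..<n}. (1 + (1 - r) * m / real L) / (1 + m / real L))"
  define Q where "Q = (1 + (1 - r) * m / real n) / (1 + m / real n)"
  have e1: "(\<Prod>L\<in>{k..<Suc n}. (1 + (1 - r) * m / real L) / (1 + m / real L)) = P * Q"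
    using step unfolding P_def Q_def by (simp add: prod.op_ivl_Suc)
  have IH: "P \<le> A * B" using step.IH unfolding P_def A_def B_def .
  have F: "Q \<le> C * D" unfolding Q_def C_def D_def by (rule factor_bound[OF assms(1-3) n1])
  have Q0: "0 \<le> Q" unfolding Q_def using assms by (intro divide_nonneg_nonneg add_nonneg_nonneg) auto
  have AB0: "0 \<le> A * B" unfolding A_def B_def by simp
  have "P * Q \<le> (A * B) * (C * D)" by (rule mult_mono[OF IH F AB0 Q0])
  also have "\<dots> = (A * C) * (B * D)" by (simp only: mult_ac)
  also have "A * C = (real k / real (Suc n)) powr (m * r)"
    unfolding A_def C_def using n1 by (simp add: powr_mult[symmetric])
  also have "B * D = exp (m^2 * (2 / real k - 2 / real (Suc n)))"
  proof -
    have "m^2 * (2 / real k - 2 / real n) + m^2 * (2 / real n - 2 / real (Suc n))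
        = m^2 * (2 / real k - 2 / real (Suc n))" by (simp only: right_diff_distrib)
    then show ?thesis unfolding B_def D_def by (simp only: exp_add[symmetric])
  qed
  finally show ?case using e1 by simp
qed

definition cnt :: "nat \<Rightarrow> nat list \<Rightarrow> nat" where
  "cnt k ts = card {i. i < length ts \<and> 1 \<le> ts ! i \<and> ts ! i \<le> k}"

lemma card_lessSuc:
  "card {i. i < Suc L \<and> Q i} = card {i. i < L \<and> Q i} + (if Q L then 1 else 0)"
proof (cases "Q L")
  case True
  have "{i. i < Suc L \<and> Q i} = insert L {i. i < L \<and> Q i}" using True by (auto simp: less_Suc_eq)
  then show ?thesis using True by simp
next
  case False
  have "{i. i < Suc L \<and> Q i} = {i. i < L \<and> Q i}" using False by (auto simp: less_Suc_eq)
  then show ?thesis using False by simp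
qed

lemma cnt_append: "cnt k (ts @ [x]) = cnt k ts + (if 1 \<le> x \<and> x \<le> k then 1 else 0)"
proof -
  have "{i. i < length (ts @ [x]) \<and> 1 \<le> (ts @ [x]) ! i \<and> (ts @ [x]) ! i \<le> k}
      = {i. i < Suc (length ts) \<and> 1 \<le> (ts @ [x]) ! i \<and> (ts @ [x]) ! i \<le> k}" by simp
  moreover have "{i. i < length ts \<and> 1 \<le> (ts @ [x]) ! i \<and> (ts @ [x]) ! i \<le> k}
      = {i. i < length ts \<and> 1 \<le> ts ! i \<and> ts ! i \<le> k}" by (auto simp: nth_append)
  ultimately show ?thesis unfolding cnt_def by (simp only: card_lessSuc) simp
qed

lemma set_pmf_step:
  assumes "ts \<noteq> []" "ts' \<in> set_pmf (yule_step r ts)"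
  shows "\<exists>j<length ts. ts' = ts @ [Suc (length ts)] \<or> ts' = ts @ [ts ! j]"
  using assms by (auto simp: yule_step_def set_pmf_of_set lessThan_empty_iff split: if_splits)

lemma step_finite:
  assumes "ts \<noteq> []" shows "finite (set_pmf (yule_step r ts))"
proof -
  have "set_pmf (yule_step r ts) \<subseteq> (\<lambda>x. ts @ [x]) ` insert (Suc (length ts)) (set ts)"
    using set_pmf_step[OF assms] by fastforce
  then show ?thesis by (rule finite_subset) simp
qed

lemma pop_support:
  "ts \<in> set_pmf (yule_pop r n) \<Longrightarrow> length ts = Suc n \<and> (\<forall>i<length ts. 1 \<le> ts ! i \<and> ts ! i \<le> Suc n)"
proof (induction n arbitrary: ts)
  case 0 then show ?case by simp
next
  case (Suc n)
  then obtain ts0 where t0: "ts0 \<in> set_pmf (yule_pop r n)" "ts \<in> set_pmf (yule_step r ts0)" by auto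
  have IH: "length ts0 = Suc n" "\<forall>i<length ts0. 1 \<le> ts0 ! i \<and> ts0 ! i \<le> Suc n" using Suc.IH[OF t0(1)] by auto
  then have "ts0 \<noteq> []" by auto
  from set_pmf_step[OF this t0(2)] obtain j where j: "j < length ts0" "ts = ts0 @ [Suc (length ts0)] \<or> ts = ts0 @ [ts0 ! j]" by blast
  show ?case
  proof (rule conjI)
    show "length ts = Suc (Suc n)" using j IH by auto
    show "\<forall>i<length ts. 1 \<le> ts ! i \<and> ts ! i \<le> Suc (Suc n)"
    proof (intro allI impI)
    fix i assume "i < length ts"
    then have "i < Suc (length ts0)" using j by auto
    then show "1 \<le> ts ! i \<and> ts ! i \<le> Suc (Suc n)"
      using j IH by (auto simp: nth_append less_Suc_eq)
    qed
  qed
qed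

lemma pop_finite: "finite (set_pmf (yule_pop r n))"
proof -
  have "set_pmf (yule_pop r n) \<subseteq> {ts. set ts \<subseteq> {..Suc n} \<and> length ts = Suc n}"
    using pop_support by (fastforce simp: in_set_conv_nth)
  then show ?thesis by (rule finite_subset) (rule finite_lists_length_eq, simp)
qed

lemma E_bind:
  fixes h :: "'b \<Rightarrow> real"
  assumes "finite (set_pmf p)" "\<And>x. x \<in> set_pmf p \<Longrightarrow> finite (set_pmf (f x))"
  shows "measure_pmf.expectation (p \<bind> f) h = measure_pmf.expectation p (\<lambda>x. measure_pmf.expectation (f x) h)"
  using assms by (simp add: pmf_expectation_bind[of "set_pmf p"] integral_measure_pmf[of "set_pmf p"])

lemma E_mono:
  fixes f g :: "'a \<Rightarrow> real"
  assumes "finite (set_pmf p)" "\<And>x. x \<in> set_pmf p \<Longrightarrow> f x \<le> g x"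
  shows "measure_pmf.expectation p f \<le> measure_pmf.expectation p g"
  using assms by (simp add: integral_measure_pmf[of "set_pmf p"] sum_mono mult_left_mono)

lemma E_const:
  fixes f :: "'a \<Rightarrow> real"
  assumes "finite (set_pmf p)" "\<And>x. x \<in> set_pmf p \<Longrightarrow> f x = c"
  shows "measure_pmf.expectation p f = c"
  using assms by (simp add: integral_measure_pmf[of "set_pmf p"] sum_distrib_right[symmetric] sum_pmf_eq_1)

lemma gg_succ: "gg m (Suc c) - gg m c = gg m c * m / real c"
  by (simp add: algebra_simps)

lemma step_bound:
  assumes "ts \<noteq> []" "k \<le> length ts" "0 \<le> m" "0 \<le> r" "r \<le> 1"
  shows "measure_pmf.expectation (yule_step r ts) (\<lambda>t. gg m (cnt k t))
     \<le> gg m (cnt k ts) * (1 + (1 - r) * m / real (length ts))"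
proof -
  define L where "L = length ts"
  define c where "c = cnt k ts"
  define P where "P j = (1 \<le> ts ! j \<and> ts ! j \<le> k)" for j
  have L0: "0 < L" using assms by (simp add: L_def)
  have inner: "measure_pmf.expectation (bernoulli_pmf r \<bind>
        (\<lambda>mut. return_pmf (ts @ [if mut then Suc (length ts) else ts ! j]))) (\<lambda>t. gg m (cnt k t))
      = r * gg m c + (1 - r) * (gg m c + (if P j then 1 else 0) * (gg m c * m / real c))" for j
  proof -
    have "measure_pmf.expectation (bernoulli_pmf r \<bind>
        (\<lambda>mut. return_pmf (ts @ [if mut then Suc (length ts) else ts ! j]))) (\<lambda>t. gg m (cnt k t))
      = measure_pmf.expectation (bernoulli_pmf r) (\<lambda>mut. gg m (cnt k (ts @ [if mut then Suc (length ts) else ts ! j])))"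
      by (subst E_bind) auto
    also have "\<dots> = gg m (cnt k (ts @ [Suc (length ts)])) * r + gg m (cnt k (ts @ [ts ! j])) * (1 - r)"
      using assms by simp
    also have "cnt k (ts @ [Suc (length ts)]) = c" using assms by (simp add: cnt_append c_def)
    also have "gg m (cnt k (ts @ [ts ! j])) = gg m c + (if P j then 1 else 0) * (gg m c * m / real c)"
      using gg_succ[of m c] by (simp add: cnt_append c_def P_def)
    finally show ?thesis by (simp add: algebra_simps)
  qed
  have sumP: "(\<Sum>j<L. (if P j then 1 else 0 :: real)) = real c"
  proof -
    have "(\<Sum>j<L. (if P j then 1 else 0 :: real)) = real (card ({..<L} \<inter> Collect P))"
      by (simp add: sum.If_cases)
    also have "{..<L} \<inter> Collect P = {i. i < length ts \<and> 1 \<le> ts ! i \<and> ts ! i \<le> k}"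
      by (auto simp: L_def P_def)
    finally show ?thesis by (simp add: c_def cnt_def)
  qed
  have "measure_pmf.expectation (yule_step r ts) (\<lambda>t. gg m (cnt k t))
      = (\<Sum>j<L. (r * gg m c + (1 - r) * (gg m c + (if P j then 1 else 0) * (gg m c * m / real c)))) / real L"
    unfolding yule_step_def
    using assms L0 inner
    by (subst pmf_expectation_bind_pmf_of_set) (auto simp: L_def divide_inverse_commute sum_distrib_left)
  also have "\<dots> = (real L * gg m c + (1 - r) * (gg m c * m / real c) * real c) / real L"
  proof -
    have e: "r * gg m c + (1 - r) * (gg m c + (if P j then 1 else 0) * (gg m c * m / real c))
        = gg m c + ((1 - r) * (gg m c * m / real c)) * (if P j then 1 else 0)" for j
      by (simp add: algebra_simps)
    have "(\<Sum>j<L. (r * gg m c + (1 - r) * (gg m c + (if P j then 1 else 0) * (gg m c * m / real c))))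
        = (\<Sum>j<L. gg m c) + ((1 - r) * (gg m c * m / real c)) * (\<Sum>j<L. (if P j then 1 else 0 :: real))"
      unfolding e by (simp add: sum.distrib sum_distrib_left)
    then show ?thesis by (simp add: sumP)
  qed
  also have "\<dots> \<le> gg m c * (1 + (1 - r) * m / real L)"
  proof (cases "c = 0")
    case True
    have "m * r \<le> m" using assms by (simp add: mult_left_le)
    then show ?thesis using True L0 gg_pos[of m c] assms by (simp add: field_simps)
  next
    case False then show ?thesis using L0 by (simp add: field_simps)
  qed
  finally show ?thesis by (simp add: L_def c_def)
qed

lemma cnt_full:
  assumes "ts \<in> set_pmf (yule_pop r n)"
  shows "cnt (Suc n) ts = Suc n"
proof -
  have "{i. i < length ts \<and> 1 \<le> ts ! i \<and> ts ! i \<le> Suc n} = {..<Suc n}"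
    using pop_support[OF assms] by auto
  then show ?thesis using pop_support[OF assms] by (simp add: cnt_def)
qed

lemma pop_moment:
  assumes "0 < r" "r < 1" "0 \<le> m" "1 \<le> k" "k \<le> Suc n"
  shows "measure_pmf.expectation (yule_pop r n) (\<lambda>ts. gg m (cnt k ts))
     \<le> gg m k * (\<Prod>L\<in>{k..<Suc n}. 1 + (1 - r) * m / real L)"
  using assms(5)
proof (induction n)
  case 0
  then have k: "k = 1" using assms by simp
  have "measure_pmf.expectation (yule_pop r 0) (\<lambda>ts. gg m (cnt k ts)) = gg m k"
    by (rule E_const[OF pop_finite]) (use cnt_full[of _ r 0] k in simp)
  then show ?case using k by simp
next
  case (Suc n)
  show ?case
  proof (cases "k = Suc (Suc n)")
    case True
    have "measure_pmf.expectation (yule_pop r (Suc n)) (\<lambda>ts. gg m (cnt k ts)) = gg m k"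
      by (rule E_const[OF pop_finite]) (use cnt_full[of _ r "Suc n"] True in simp)
    then show ?thesis using True by simp
  next
    case False
    then have kn: "k \<le> Suc n" using Suc.prems by simp
    define F where "F = 1 + (1 - r) * m / real (Suc n)"
    have F0: "0 \<le> F" using assms by (simp add: F_def)
    have "measure_pmf.expectation (yule_pop r (Suc n)) (\<lambda>ts. gg m (cnt k ts))
        = measure_pmf.expectation (yule_pop r n) (\<lambda>ts. measure_pmf.expectation (yule_step r ts) (\<lambda>t. gg m (cnt k t)))"
    proof -
      have ne: "ts \<noteq> []" if "ts \<in> set_pmf (yule_pop r n)" for ts
        using pop_support[OF that] by auto
      show ?thesis unfolding yule_pop.simps
        by (rule E_bind[OF pop_finite step_finite[OF ne]])
    qed
    also have "\<dots> \<le> measure_pmf.expectation (yule_pop r n) (\<lambda>ts. gg m (cnt k ts) * F)"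
    proof (rule E_mono[OF pop_finite])
      fix ts assume "ts \<in> set_pmf (yule_pop r n)"
      with pop_support have "length ts = Suc n" by blast
      moreover from this have "ts \<noteq> []" by auto
      ultimately show "measure_pmf.expectation (yule_step r ts) (\<lambda>t. gg m (cnt k t)) \<le> gg m (cnt k ts) * F"
        using step_bound[of ts k m r] kn assms by (simp add: F_def)
    qed
    also have "\<dots> = measure_pmf.expectation (yule_pop r n) (\<lambda>ts. gg m (cnt k ts)) * F"
      by simp
    also have "\<dots> \<le> gg m k * (\<Prod>L\<in>{k..<Suc n}. 1 + (1 - r) * m / real L) * F"
      using Suc.IH[OF kn] F0 by (rule mult_right_mono)
    also have "\<dots> = gg m k * (\<Prod>L\<in>{k..<Suc (Suc n)}. 1 + (1 - r) * m / real L)"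
      using kn by (simp add: prod.op_ivl_Suc F_def)
    finally show ?thesis .
  qed
qed

lemma cnt_le: "cnt k ts \<le> length ts"
proof -
  have "cnt k ts \<le> card {..<length ts}" unfolding cnt_def by (rule card_mono) auto
  then show ?thesis by simp
qed

lemma exp_bound:
  fixes y B :: real assumes "0 \<le> y" "y \<le> B"
  shows "exp y \<le> 1 + y * exp B"
proof -
  have "1 - y \<le> exp (- y)" using exp_ge_add_one_self[of "-y"] by simp
  then have "(1 - y) * exp y \<le> exp (- y) * exp y" by (rule mult_right_mono) simp
  also have "\<dots> = 1" by (simp add: exp_minus)
  finally have "exp y \<le> 1 + y * exp y" by (simp add: algebra_simps)
  also have "y * exp y \<le> y * exp B" using assms by (intro mult_left_mono) auto
  finally show ?thesis by simp
qed

theorem lemma4p2: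
  fixes r m :: real
  assumes "0 < r" and "r < 1" and "1 \<le> m"
  shows "\<exists>C>0. \<forall>N k::nat. 1 \<le> k \<longrightarrow> k \<le> N \<longrightarrow>
           moment_X r m k N \<le> (real k / real N) powr (m * r) * (1 + C / real k)"
proof -
  define C where "C = 2 * m^2 * exp (2 * m^2)"
  have C0: "0 < C" using assms by (simp add: C_def)
  show ?thesis
  proof (intro exI[of _ C] conjI allI impI)
    show "0 < C" by (fact C0)
    fix N k :: nat assume k1: "1 \<le> k" and kN: "k \<le> N"
    define n where "n = N - 1"
    have Nn: "N = Suc n" using k1 kN by (simp add: n_def)
    have m0: "0 \<le> m" using assms by simp
    have gN: "0 < gg m N" and gk: "0 < gg m k" using gg_pos[OF m0] by auto
    have "moment_X r m k N \<le> measure_pmf.expectation (yule_pop r n) (\<lambda>ts. gg m (cnt k ts) / gg m N)"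
      unfolding moment_X_def n_def[symmetric]
    proof (rule E_mono[OF pop_finite])
      fix ts assume ts: "ts \<in> set_pmf (yule_pop r n)"
      then have len: "length ts = N" using pop_support Nn by blast
      have "frac_types k ts = real (cnt k ts) / real N" by (simp add: frac_types_def cnt_def len)
      then show "frac_types k ts powr m \<le> gg m (cnt k ts) / gg m N"
        using pointwise[of m "cnt k ts" N] cnt_le[of k ts] len assms Nn by simp
    qed
    also have "\<dots> = measure_pmf.expectation (yule_pop r n) (\<lambda>ts. gg m (cnt k ts)) / gg m N"
      by simp
    also have "\<dots> \<le> gg m k * (\<Prod>L\<in>{k..<N}. 1 + (1 - r) * m / real L) / gg m N"
      using pop_moment[OF assms(1,2) m0 k1, of n] Nn kN gN by (intro divide_right_mono) auto
    also have "\<dots> = (\<Prod>L\<in>{k..<N}. (1 + (1 - r) * m / real L) / (1 + m / real L))"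
      using gg_split[OF kN, of m] gk by (simp add: prod_dividef)
    also have "\<dots> \<le> (real k / real N) powr (m * r) * exp (m^2 * (2 / real k - 2 / real N))"
      using prod_bound[OF assms k1 kN] .
    also have "\<dots> \<le> (real k / real N) powr (m * r) * (1 + C / real k)"
    proof (rule mult_left_mono)
      have y0: "0 \<le> 2 * m^2 / real k" by simp
      have yB: "2 * m^2 / real k \<le> 2 * m^2"
        using k1 by (simp add: divide_le_eq mult_le_cancel_left1)
      have "exp (m^2 * (2 / real k - 2 / real N)) \<le> exp (2 * m^2 / real k)"
      proof -
        have "0 \<le> 2 / real N" by simp
        then have "m^2 * (2 / real k - 2 / real N) \<le> m^2 * (2 / real k)"
          by (intro mult_left_mono) auto
        then show ?thesis by simp
      qed
      also have "\<dots> \<le> 1 + 2 * m^2 / real k * exp (2 * m^2)" by (rule exp_bound[OF y0 yB])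
      also have "\<dots> = 1 + C / real k" by (simp add: C_def)
      finally show "exp (m^2 * (2 / real k - 2 / real N)) \<le> 1 + C / real k" .
    qed simp
    finally show "moment_X r m k N \<le> (real k / real N) powr (m * r) * (1 + C / real k)" .
  qed
qed
end
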